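(* Let $p$ be a polynomial of degree at most $2$, $s$ a polynomial of degree at most $1$, and $\eta$ a polynomial of degree exactly $1$ with root $\xi$. Put $$\kappa_0=p(\xi)\eta''(\xi)+\tfrac12p'(\xi)\eta'(\xi)-s(\xi)\eta'(\xi),\qquad \kappa_1=2p(\xi)\eta'(\xi),$$ and assume $(\kappa_0,\kappa_1)\neq(0,0)$. Let $\widehat T$ be the natural-form operator $$\widehat T[y]=p\,y''+\Big(\frac{p'}{2}+s-\frac{2p\eta'}{\eta}\Big)y'+\Big(\frac{p\eta''}{\eta}+\Big(\frac{p'}{2}-s\Big)\frac{\eta'}{\eta}\Big)y,$$ and suppose there is $d\in\{0,1\}$ such that for each $j\in\mathbb N_0\setminus\{d\}$ there is a polynomial eigenfunction $\widehat y_j$ of $\widehat T$ of degree exactly $j$. For $n\ge1$ let $\mathcal E_n=\operatorname{span}\{\widehat y_j: 0\le j\le n,\ j\neq d\}$ and $$\mathcal F_n=\{P\in\mathcal P_n:\ \kappa_1P'(\xi)-\kappa_0P(\xi)=0\},$$ where $\mathcal P_n$ is the space of (real) polynomials of degree at most $n$. Then $\mathcal E_n=\mathcal F_n$ for all $n\ge1$.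
   Context: The condition $\kappa_1P'(\xi)-\kappa_0P(\xi)=0$, i.e. $\big[2p\eta'P'-\big(p\eta''+\tfrac12p'\eta'-s\eta'\big)P\big]\big|_{x=\xi}=0$, is called the exceptional condition, and $\xi$ the exceptional root. This is the $X_1$ (codimension one) situation, covering the $X_1$ Laguerre polynomials of Types I, II (missing degree $d=0$), Type III (missing degree $d=1$), and the $X_1$ Jacobi polynomials ($d=0$). *)

theory Defs
  imports "HOL-Computational_Algebra.Polynomial"
begin

text \<open>The natural-form operator, evaluated pointwise at x (meaningful where eta x \<noteq> 0).\<close>
definition natT :: "real poly \<Rightarrow> real poly \<Rightarrow> real poly \<Rightarrow> real poly \<Rightarrow> real \<Rightarrow> real" where
  "natT p s eta y x =
     poly p x * poly (pderiv (pderiv y)) x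
   + (poly (pderiv p) x / 2 + poly s x - 2 * poly p x * poly (pderiv eta) x / poly eta x)
       * poly (pderiv y) x
   + (poly p x * poly (pderiv (pderiv eta)) x / poly eta x
       + (poly (pderiv p) x / 2 - poly s x) * poly (pderiv eta) x / poly eta x) * poly y x"

definition is_eigenpoly :: "real poly \<Rightarrow> real poly \<Rightarrow> real poly \<Rightarrow> real poly \<Rightarrow> bool" where
  "is_eigenpoly p s eta y \<longleftrightarrow> y \<noteq> 0 \<and>
     (\<exists>lam::real. \<forall>x. poly eta x \<noteq> 0 \<longrightarrow> natT p s eta y x = lam * poly y x)"

definition poly_span :: "(nat \<Rightarrow> real poly) \<Rightarrow> nat set \<Rightarrow> real poly set" where
  "poly_span y J = {P. \<exists>c::nat \<Rightarrow> real. P = (\<Sum>j\<in>J. smult (c j) (y j))}"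

definition kappa0 :: "real poly \<Rightarrow> real poly \<Rightarrow> real poly \<Rightarrow> real \<Rightarrow> real" where
  "kappa0 p s eta \<xi> = poly p \<xi> * poly (pderiv (pderiv eta)) \<xi>
     + 1/2 * poly (pderiv p) \<xi> * poly (pderiv eta) \<xi> - poly s \<xi> * poly (pderiv eta) \<xi>"

definition kappa1 :: "real poly \<Rightarrow> real poly \<Rightarrow> real \<Rightarrow> real" where
  "kappa1 p eta \<xi> = 2 * poly p \<xi> * poly (pderiv eta) \<xi>"

end

theory Submission
  imports Defs
begin


lemma eig_cond:
  assumes e: "eta \<noteq> 0" and r: "poly eta \<xi> = 0" and ep: "is_eigenpoly p s eta Y"
  shows "kappa1 p eta \<xi> * poly (pderiv Y) \<xi> - kappa0 p s eta \<xi> * poly Y \<xi> = 0"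
proof -
  from ep obtain lam where lam: "\<forall>x. poly eta x \<noteq> 0 \<longrightarrow> natT p s eta Y x = lam * poly Y x"
    unfolding is_eigenpoly_def by blast
  define G where "G = eta*p*pderiv (pderiv Y) + (smult (1/2) (pderiv p) + s)*eta*pderiv Y
     - smult 2 (p*pderiv eta*pderiv Y) + (p*pderiv (pderiv eta) + (smult (1/2) (pderiv p) - s)*pderiv eta)*Y
     - smult lam (eta*Y)"
  have Gx: "poly G x = 0" if "poly eta x \<noteq> 0" for x
  proof -
    have "natT p s eta Y x = lam * poly Y x" using lam that by blast
    then have "poly eta x * natT p s eta Y x - poly eta x * (lam * poly Y x) = 0" by simp
    moreover have "poly G x = poly eta x * natT p s eta Y x - poly eta x * (lam * poly Y x)"
      unfolding G_def natT_def using that by (simp add: field_simps)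
    ultimately show ?thesis by simp
  qed
  have "G = 0"
  proof (rule ccontr)
    assume "G \<noteq> 0"
    then have f: "finite {x. poly G x = 0}" by (rule poly_roots_finite)
    have "finite {x. poly eta x = 0}" using e by (rule poly_roots_finite)
    then have "finite ({x. poly G x = 0} \<union> {x. poly eta x = 0})" using f by simp
    moreover have "{x. poly G x = 0} \<union> {x. poly eta x = 0} = (UNIV::real set)" using Gx by auto
    ultimately show False by (metis infinite_UNIV_char_0)
  qed
  then have "poly G \<xi> = 0" by simp
  then show ?thesis unfolding G_def kappa0_def kappa1_def using r by (simp add: algebra_simps)
qed

lemma deg1_form: "degree (Y::real poly) \<le> 1 \<Longrightarrow> Y = [:coeff Y 0, coeff Y 1:]"
  by (rule poly_eqI) (auto simp: coeff_pCons split: nat.split intro!: coeff_eq_0)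

lemma lin_cond:
  "poly (pderiv ([:b, a:]::real poly)) x = a" "poly [:b,a:] x = b + x * a"
  by (simp_all add: pderiv_pCons)



theorem lemma4p1:
  fixes p s eta :: "real poly" and \<xi> :: real and d n :: nat and y :: "nat \<Rightarrow> real poly"
  assumes "degree p \<le> 2" and "degree s \<le> 1" and "degree eta = 1" and "poly eta \<xi> = 0"
    and "(kappa0 p s eta \<xi>, kappa1 p eta \<xi>) \<noteq> (0, 0)"
    and "d \<in> {0, 1}"
    and "\<forall>j. j \<noteq> d \<longrightarrow> degree (y j) = j \<and> is_eigenpoly p s eta (y j)"
    and "n \<ge> 1"
  shows "poly_span y {j. j \<le> n \<and> j \<noteq> d} =
         {P. degree P \<le> n \<and>
             kappa1 p eta \<xi> * poly (pderiv P) \<xi> - kappa0 p s eta \<xi> * poly P \<xi> = 0}"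
  
proof -
  let ?k0 = "kappa0 p s eta \<xi>" and ?k1 = "kappa1 p eta \<xi>"
  define J where "J = {j. j \<le> n \<and> j \<noteq> d}"
  define F where "F = (\<lambda>P. ?k1 * poly (pderiv P) \<xi> - ?k0 * poly P \<xi> = 0)"
  have e: "eta \<noteq> 0" using assms(3) by auto
  have yF: "F (y j)" if "j \<noteq> d" for j
    unfolding F_def using eig_cond[OF e assms(4)] assms(7) that by blast
  have psum: "pderiv (sum f A) = (\<Sum>x\<in>A. pderiv (f x))" for f :: "nat \<Rightarrow> real poly" and A
    using higher_pderiv_sum[of 1 f A] by simp
  have finJ: "finite J" unfolding J_def by simp
  have S0: "0 \<in> poly_span y J" unfolding poly_span_def by (rule CollectI, rule exI[of _ "\<lambda>_. 0"]) simp
  have Sadd: "Q + smult r (y j) \<in> poly_span y J" if "Q \<in> poly_span y J" "j \<in> J" for Q r j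
  proof -
    from that(1) obtain c where c: "Q = (\<Sum>i\<in>J. smult (c i) (y i))" unfolding poly_span_def by blast
    have "Q + smult r (y j) = (\<Sum>i\<in>J. smult (c i + (if i = j then r else 0)) (y i))"
      using c that(2) finJ by (simp add: smult_add_left sum.distrib if_distrib[of "\<lambda>t. smult t _"] sum.delta' cong: if_cong)
    then show ?thesis unfolding poly_span_def
      by (intro CollectI exI[of _ "\<lambda>i. c i + (if i = j then r else 0)"])
  qed
  have Flin: "F (P - smult r Y)" if "F P" "F Y" for P Y r
    using that unfolding F_def by (simp add: pderiv_diff pderiv_smult algebra_simps)
  have base: "P \<in> poly_span y J" if "degree P = 0" "F P" for P
  proof -
    have P: "P = [:coeff P 0:]" using deg1_form[of P] that(1) by (simp add: coeff_eq_0)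
    show ?thesis
    proof (cases "d = 0")
      case True
      have d1: "1 \<noteq> d" using True by simp
      let ?Y = "y 1"
      have dY: "degree ?Y = 1" using assms(7) d1 by blast
      have Y: "?Y = [:coeff ?Y 0, coeff ?Y 1:]" using deg1_form dY by simp
      have a: "coeff ?Y 1 \<noteq> 0" using dY by (metis leading_coeff_0_iff one_neq_zero degree_0)
      have "F [:coeff ?Y 0, coeff ?Y 1:]" using yF[OF d1] Y by simp
      then have "?k1 * coeff ?Y 1 - ?k0 * (coeff ?Y 0 + \<xi> * coeff ?Y 1) = 0"
        unfolding F_def lin_cond .
      then have "?k0 \<noteq> 0" using a assms(5) by auto
      moreover have "F [:coeff P 0:]" using that(2) P by simp
      then have "?k0 * coeff P 0 = 0" unfolding F_def by (simp add: pderiv_pCons)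
      ultimately have "P = 0" using P by simp
      then show ?thesis using S0 by simp
    next
      case False
      then have d0: "0 \<noteq> d" by simp
      have "y 0 \<noteq> 0" using assms(7) d0 unfolding is_eigenpoly_def by blast
      moreover have dY: "degree (y 0) = 0" using assms(7) d0 by blast
      ultimately have c0: "coeff (y 0) 0 \<noteq> 0" by (metis leading_coeff_0_iff)
      have Y: "y 0 = [:coeff (y 0) 0:]" using deg1_form[of "y 0"] dY by (simp add: coeff_eq_0)
      have "0 \<in> J" unfolding J_def using d0 by simp
      from Sadd[OF S0 this, of "coeff P 0 / coeff (y 0) 0"]
      have "smult (coeff P 0 / coeff (y 0) 0) (y 0) \<in> poly_span y J" by simp
      moreover have "smult (coeff P 0 / coeff (y 0) 0) (y 0) = P"
        using c0 by (subst Y, subst (2) P) simp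
      ultimately show ?thesis by simp
    qed
  qed
  have main: "\<forall>P. degree P \<le> m \<longrightarrow> m \<le> n \<longrightarrow> F P \<longrightarrow> P \<in> poly_span y J" for m
  proof (induction m)
    case 0
    then show ?case using base by simp
  next
    case (Suc k)
    show ?case
    proof (intro allI impI)
      fix P assume dP: "degree P \<le> Suc k" and kn: "Suc k \<le> n" and FP: "F P"
      show "P \<in> poly_span y J"
      proof (cases "degree P \<le> k")
        case True then show ?thesis using Suc.IH kn FP by simp
      next
        case False
        then have dPe: "degree P = Suc k" using dP by simp
        show ?thesis
        proof (cases "Suc k = d")
          case True
          then have k0: "k = 0" "d = 1" using assms(6) by auto
          have d0: "0 \<noteq> d" using k0 by simp
          have "y 0 \<noteq> 0" using assms(7) d0 unfolding is_eigenpoly_def by blast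
          moreover have dY: "degree (y 0) = 0" using assms(7) d0 by blast
          ultimately have c0: "coeff (y 0) 0 \<noteq> 0" by (metis leading_coeff_0_iff)
          have Y: "y 0 = [:coeff (y 0) 0:]" using deg1_form[of "y 0"] dY by (simp add: coeff_eq_0)
          have "F [:coeff (y 0) 0:]" using yF[OF d0] Y by simp
          then have "?k0 * coeff (y 0) 0 = 0" unfolding F_def by (simp add: pderiv_pCons)
          then have "?k0 = 0" using c0 by simp
          then have k1: "?k1 \<noteq> 0" using assms(5) by auto
          have P: "P = [:coeff P 0, coeff P 1:]" using deg1_form dP k0 by simp
          have "F [:coeff P 0, coeff P 1:]" using FP P by simp
          then have "?k1 * coeff P 1 - ?k0 * (coeff P 0 + \<xi> * coeff P 1) = 0"
            unfolding F_def lin_cond .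
          then have "coeff P 1 = 0" using k1 \<open>?k0 = 0\<close> by simp
          then have False using dPe k0 by (metis One_nat_def leading_coeff_0_iff one_neq_zero degree_0)
          then show ?thesis ..
        next
          case False
          let ?Y = "y (Suc k)"
          have dY: "degree ?Y = Suc k" using assms(7) False by metis
          have lY: "lead_coeff ?Y \<noteq> 0" using dY by (metis leading_coeff_0_iff nat.distinct(1) degree_0)
          define r where "r = lead_coeff P / lead_coeff ?Y"
          define Q where "Q = P - smult r ?Y"
          have FQ: "F Q" unfolding Q_def using Flin FP yF False by blast
          have dQ: "degree Q \<le> k"
          proof (rule degree_le, intro allI impI)
            fix i assume "k < i"
            then consider "i = Suc k" | "i > Suc k" by linarith
            then show "coeff Q i = 0"
            proof cases
              case 1 then show ?thesis unfolding Q_def r_def using lY dPe dY by simp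
            next
              case 2 then show ?thesis unfolding Q_def using dPe dY by (simp add: coeff_eq_0)
            qed
          qed
          have "Q \<in> poly_span y J" using Suc.IH dQ kn FQ by simp
          moreover have "Suc k \<in> J" unfolding J_def using kn False by simp
          ultimately have "Q + smult r ?Y \<in> poly_span y J" by (rule Sadd)
          then show ?thesis unfolding Q_def by simp
        qed
      qed
    qed
  qed
  have sub1: "poly_span y J \<subseteq> {P. degree P \<le> n \<and> F P}"
  proof
    fix P assume "P \<in> poly_span y J"
    then obtain c where c: "P = (\<Sum>i\<in>J. smult (c i) (y i))" unfolding poly_span_def by blast
    have "degree (\<Sum>i\<in>J. smult (c i) (y i)) \<le> n"
      by (rule degree_sum_le[OF finJ]) (use assms(7) J_def in \<open>auto intro: order.trans[OF degree_smult_le]\<close>)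
    moreover have "F (\<Sum>i\<in>J. smult (c i) (y i))"
    proof -
      have "?k1 * poly (pderiv (y i)) \<xi> - ?k0 * poly (y i) \<xi> = 0" if "i \<in> J" for i
        using yF[of i] that unfolding F_def J_def by simp
      then have "(\<Sum>i\<in>J. c i * (?k1 * poly (pderiv (y i)) \<xi> - ?k0 * poly (y i) \<xi>)) = 0" by simp
      then show ?thesis unfolding F_def
        by (simp add: psum poly_sum pderiv_smult sum_distrib_left algebra_simps sum_subtractf)
    qed
    ultimately show "P \<in> {P. degree P \<le> n \<and> F P}" using c by simp
  qed
  have "{P. degree P \<le> n \<and> F P} \<subseteq> poly_span y J" using main by blast
  with sub1 show ?thesis unfolding J_def F_def by blast
qed

end
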